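(* Assume that for every $k\ge 1$ the function $\hat{\mathcal L}(\cdot,y_k)$ is convex, that $\tau_1\tau_2\|K\|^2\le 1/4$ and $\tau_1\le 1/(4L)$. For $k\ge1$ define \[\varepsilon_k:=\hat{\mathcal L}(x_k,y_k)-\ell_{\hat{\mathcal L}(\cdot,y_k)}(x_k;x_{k-1}).\] Let $(x_*,y_* )$ be a saddle point of $\Phi$. Then: (a) for every $k\ge1$, \[r^y_k:=\frac{y^{k-1}-y^k}{\tau_2}\in\partial\big[-\hat{\mathcal L}(x_k,\cdot)+h_2\big](y_k),\qquad r^x_k:=\frac{x_{k-1}-x_k}{\tau_1}\in\partial_{\varepsilon_k}\big[\hat{\mathcal L}(\cdot,y_k)+h_1\big](x_k);\] (b) for every $k\ge1$, $\varepsilon_k\le \frac{1}{8\tau_1}\|x_k-x_{k-1}\|^2$ and $\frac{1}{\tau_2}\|y^k-y_k\|^2\le\frac{1}{4\tau_1}\|x_k-x_{k-1}\|^2$; (c) for every $N\ge1$, \[\frac{1}{4\tau_1}\sum_{k=1}^N\|x_k-x_{k-1}\|^2+\frac{1}{2\tau_2}\sum_{k=1}^N\|y_k-y^{k-1}\|^2\le\frac{1}{2\tau_1}\|x_*-x_0\|^2+\frac{1}{2\tau_2}\|y_*-y_0\|^2.\]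
   Context: Let $n,m_1,m_2$ be positive integers, $Q\in\mathbb R^{n\times n}$ symmetric, $c\in\mathbb R^n$, $A\in\mathbb R^{m_1\times n}$, $b\in\mathbb R^{m_1}$, $B\in\mathbb R^{m_2\times n}$, $d\in\mathbb R^{m_2}$. Let $K:=-\begin{pmatrix}A\\ B\end{pmatrix}\in\mathbb R^{(m_1+m_2)\times n}$ and $r:=(b;d)\in\mathbb R^{m_1+m_2}$. Fix $\rho\ge0$ and let $\mathbf 1$ be the all-ones vector. For $x\in\mathbb R^n$, $y\in\mathbb R^{m_1+m_2}$ define $\hat{\mathcal L}(x,y):=\langle x,Qx\rangle+\langle c,x\rangle+\langle y,Kx+r\rangle+\rho\langle x,\mathbf 1-x\rangle$, so $\nabla_x\hat{\mathcal L}(x,y)=c+\rho\mathbf 1+K^\top y+2Qx-2\rho x$ and $\nabla_y\hat{\mathcal L}(x,y)=Kx+r$. Let $Y:=\mathbb R_+^{m_1}\times\mathbb R^{m_2}$, $h_1$ the indicator of $[0,1]^n$ and $h_2$ the indicator of $Y$ (value $0$ on the set, $+\infty$ outside), and $\Phi(x,y):=\hat{\mathcal L}(x,y)+h_1(x)-h_2(y)$. A saddle point $(x_*,y_* )$ of $\Phi$ satisfies $\Phi(x_*,y)\le\Phi(x_*,y_* )\le\Phi(x,y_* )$ for all $x,y$. Let $L:=2(\|Q\|+\rho)$, where $\|\cdot\|$ on matrices is the spectral norm. For differentiable $f$, $\ell_f(x;x'):=f(x')+\langle\nabla f(x'),x-x'\rangle$. For a convex function $g$, $\partial g$ is its subdifferential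 and $\partial_\varepsilon g(x):=\{v: g(z)\ge g(x)+\langle v,z-x\rangle-\varepsilon\ \forall z\}$. PDHG iterates with step sizes $\tau_1,\tau_2>0$: choose $x_0\in[0,1]^n$, $y_0\in\mathbb R^{m_1+m_2}$, set $x_{-1}:=x_0$, $\bar x_0:=x_0$, and for $k\ge1$: $y_k=\Pi_Y(y_{k-1}+\tau_2(K\bar x_{k-1}+r))$, $x_k=\Pi_{[0,1]^n}(x_{k-1}-\tau_1\nabla_x\hat{\mathcal L}(x_{k-1},y_k))$, $\bar x_k=2x_k-x_{k-1}$, where $\Pi$ denotes Euclidean projection. Auxiliary sequence: $y^0:=y_0$ and $y^k:=y_k+\tau_2K(\bar x_k-x_k)$ for $k\ge1$. *)

theory Defs
  imports "HOL-Analysis.Analysis"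
begin

text \<open>Dual variables y = (y1, y2) with y1 in R^m1 (inequality block), y2 in R^m2 (equality block).
  K = -(A;B), r = (b;d).\<close>

definition Kop :: "real^'n^'m1 \<Rightarrow> real^'n^'m2 \<Rightarrow> real^'n \<Rightarrow> ((real^'m1) \<times> (real^'m2))" where
  "Kop A B x = (- (A *v x), - (B *v x))"

definition KTop :: "real^'n^'m1 \<Rightarrow> real^'n^'m2 \<Rightarrow> ((real^'m1) \<times> (real^'m2)) \<Rightarrow> real^'n" where
  "KTop A B y = - (transpose A *v fst y + transpose B *v snd y)"

definition ones :: "real^'n" where "ones = (\<chi> i. 1)"

definition Lhat :: "real^'n^'n \<Rightarrow> real^'n \<Rightarrow> real^'n^'m1 \<Rightarrow> real^'m1 \<Rightarrow> real^'n^'m2 \<Rightarrow> real^'m2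
    \<Rightarrow> real \<Rightarrow> real^'n \<Rightarrow> ((real^'m1) \<times> (real^'m2)) \<Rightarrow> real" where
  "Lhat Q c A b B d \<rho> x y = x \<bullet> (Q *v x) + c \<bullet> x + y \<bullet> (Kop A B x + (b, d)) + \<rho> * (x \<bullet> (ones - x))"

definition gradx :: "real^'n^'n \<Rightarrow> real^'n \<Rightarrow> real^'n^'m1 \<Rightarrow> real^'n^'m2
    \<Rightarrow> real \<Rightarrow> real^'n \<Rightarrow> ((real^'m1) \<times> (real^'m2)) \<Rightarrow> real^'n" where
  "gradx Q c A B \<rho> x y = c + \<rho> *\<^sub>R ones + KTop A B y + 2 *\<^sub>R (Q *v x) - (2 * \<rho>) *\<^sub>R x"

definition boxset :: "(real^'n) set" where "boxset = {x. \<forall>i. 0 \<le> x $ i \<and> x $ i \<le> 1}"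

definition Yset :: "((real^'m1) \<times> (real^'m2)) set" where "Yset = {y. \<forall>i. 0 \<le> fst y $ i}"

definition h1 :: "real^'n \<Rightarrow> ereal" where "h1 x = (if x \<in> boxset then 0 else \<infinity>)"
definition h2 :: "((real^'m1) \<times> (real^'m2)) \<Rightarrow> ereal" where "h2 y = (if y \<in> Yset then 0 else \<infinity>)"

definition Phi where
  "Phi Q c A b B d \<rho> x y = ereal (Lhat Q c A b B d \<rho> x y) + h1 x - h2 y"

definition saddle_point where
  "saddle_point Q c A b B d \<rho> xs ys \<longleftrightarrow>
     (\<forall>x y. Phi Q c A b B d \<rho> xs y \<le> Phi Q c A b B d \<rho> xs ys \<and>
            Phi Q c A b B d \<rho> xs ys \<le> Phi Q c A b B d \<rho> x ys)"

definition subdiff :: "('a::real_inner \<Rightarrow> ereal) \<Rightarrow> 'a \<Rightarrow> 'a set" where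
  "subdiff g x = {v. \<forall>z. g z \<ge> g x + ereal (v \<bullet> (z - x))}"

definition eps_subdiff :: "real \<Rightarrow> ('a::real_inner \<Rightarrow> ereal) \<Rightarrow> 'a \<Rightarrow> 'a set" where
  "eps_subdiff \<epsilon> g x = {v. \<forall>z. g z \<ge> g x + ereal (v \<bullet> (z - x)) - ereal \<epsilon>}"

definition xbar :: "(nat \<Rightarrow> real^'n) \<Rightarrow> nat \<Rightarrow> real^'n" where
  "xbar x k = (if k = 0 then x 0 else 2 *\<^sub>R x k - x (k - 1))"

definition yaux where
  "yaux A B \<tau>2 x y k = (if k = 0 then y 0 else y k + \<tau>2 *\<^sub>R Kop A B (xbar x k - x k))"

end

theory Submission
  imports Defs
begin

lemma Kop_add: "Kop A B (u + v) = Kop A B u + Kop A B v"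
  by (simp add: Kop_def matrix_vector_right_distrib)
lemma Kop_diff: "Kop A B (u - v) = Kop A B u - Kop A B v"
  by (simp add: Kop_def matrix_vector_mult_diff_distrib)
lemma Kop_scale: "Kop A B (s *\<^sub>R u) = s *\<^sub>R Kop A B u"
  by (simp add: Kop_def matrix_vector_mult_scaleR)
lemma inner_Kop: "y \<bullet> Kop A B u = KTop A B y \<bullet> u"
  by (cases y) (simp add: Kop_def KTop_def inner_add_left inner_diff_left dot_lmul_matrix)
lemma Kop_bl: "bounded_linear (Kop A B)"
proof -
  have "Kop A B = (\<lambda>u. (- (A *v u), - (B *v u)))" by (simp add: Kop_def fun_eq_iff)
  moreover have "bounded_linear (\<lambda>u. (- (A *v u), - (B *v u)))"
    by (intro bounded_linear_Pair bounded_linear_minus matrix_vector_mul_bounded_linear)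
  ultimately show ?thesis by simp
qed

lemma sym_inner: fixes Q :: "real^'n^'n" assumes "transpose Q = Q" shows "u \<bullet> (Q *v h) = h \<bullet> (Q *v u)"
proof -
  have "u \<bullet> (Q *v h) = (u v* Q) \<bullet> h" by (rule dot_lmul_matrix[symmetric])
  also have "u v* Q = Q *v u" using vector_transpose_matrix[of u Q] assms by simp
  finally show ?thesis by (simp add: inner_commute)
qed

lemma Lhat_expand:
  assumes "transpose Q = Q"
  shows "Lhat Q c A b B d \<rho> (u + h) y = Lhat Q c A b B d \<rho> u y + gradx Q c A B \<rho> u y \<bullet> h
     + (h \<bullet> (Q *v h) - \<rho> * (h \<bullet> h))"
  using sym_inner[OF assms, of u h]
  by (simp add: Lhat_def gradx_def matrix_vector_right_distrib Kop_add inner_add_left inner_add_right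
      inner_diff_left inner_diff_right inner_Kop algebra_simps inner_commute)

lemma Lhat_ydiff: "Lhat Q c A b B d \<rho> u z - Lhat Q c A b B d \<rho> u w = (z - w) \<bullet> (Kop A B u + (b, d))"
  by (simp add: Lhat_def inner_diff_left)

lemma pure1: fixes X Y a a' b b' c c' :: real
  shows "X = Y + a + (b - c) \<Longrightarrow> a = a' / 2 \<Longrightarrow> b = b' / 4 \<Longrightarrow> c = c' / 4 \<Longrightarrow> X = Y + a' / 2 + (b' - c') / 4"
  by (simp add: field_simps)
lemma pure2: fixes F0 F1 F2 G q :: real
  shows "F2 \<le> (1 - 1/2) * F0 + (1/2) * F1 \<Longrightarrow> F2 = F0 + G / 2 + q / 4 \<Longrightarrow> F1 = F0 + G + q \<Longrightarrow> 0 \<le> q"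
  by (simp add: field_simps)

lemma convex_q:
  assumes "transpose Q = Q" "convex_on UNIV (\<lambda>u. Lhat Q c A b B d \<rho> u y)"
  shows "0 \<le> h \<bullet> (Q *v h) - \<rho> * (h \<bullet> h)"
proof -
  let ?f = "\<lambda>u. Lhat Q c A b B d \<rho> u y"
  let ?g = "gradx Q c A B \<rho> 0 y"
  have pt: "(1 - 1/2) *\<^sub>R 0 + (1/2::real) *\<^sub>R (0 + h) = 0 + (1/2) *\<^sub>R h"
    by simp
  have c1: "?f ((1 - 1/2) *\<^sub>R 0 + (1/2) *\<^sub>R (0 + h)) \<le> (1 - 1/2) * ?f 0 + (1/2) * ?f (0 + h)"
    using assms(2) by (intro convex_onD) auto
  have c1': "?f (0 + (1/2) *\<^sub>R h) \<le> (1 - 1/2) * ?f 0 + (1/2) * ?f (0 + h)"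
    using c1 unfolding pt .
  have e0: "?f (0 + (1/2) *\<^sub>R h) = ?f 0 + ?g \<bullet> ((1/2) *\<^sub>R h)
       + (((1/2) *\<^sub>R h) \<bullet> (Q *v ((1/2) *\<^sub>R h)) - \<rho> * (((1/2) *\<^sub>R h) \<bullet> ((1/2) *\<^sub>R h)))"
    by (rule Lhat_expand[OF assms(1)])
  have a1: "?g \<bullet> ((1/2) *\<^sub>R h) = (?g \<bullet> h) / 2" by simp
  have a2: "((1/2) *\<^sub>R h) \<bullet> (Q *v ((1/2) *\<^sub>R h)) = (h \<bullet> (Q *v h)) / 4"
    by (simp add: matrix_vector_mult_scaleR)
  have a3: "\<rho> * (((1/2) *\<^sub>R h) \<bullet> ((1/2) *\<^sub>R h)) = (\<rho> * (h \<bullet> h)) / 4" by simp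
  have e1: "?f (0 + (1/2) *\<^sub>R h) = ?f 0 + (?g \<bullet> h) / 2 + (h \<bullet> (Q *v h) - \<rho> * (h \<bullet> h)) / 4"
    by (rule pure1[OF e0 a1 a2 a3])
  have e2: "?f (0 + h) = ?f 0 + ?g \<bullet> h + (h \<bullet> (Q *v h) - \<rho> * (h \<bullet> h))"
    by (rule Lhat_expand[OF assms(1)])
  show ?thesis by (rule pure2[OF c1' e1 e2])
qed

lemma polar: fixes p q s t :: "'a::real_inner"
  shows "(p - q) \<bullet> (s - t) = ((norm (t - p))\<^sup>2 + (norm (q - s))\<^sup>2 - (norm (p - s))\<^sup>2 - (norm (q - t))\<^sup>2) / 2"
  by (simp add: power2_norm_eq_inner inner_diff_left inner_diff_right inner_commute algebra_simps)

lemma aux_cvx: "0 \<le> u \<Longrightarrow> 0 \<le> v \<Longrightarrow> u + v = 1 \<Longrightarrow> a \<le> 1 \<Longrightarrow> b \<le> 1 \<Longrightarrow> u * a + v * b \<le> (1::real)"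
proof -
  assume h: "0 \<le> u" "0 \<le> v" "u + v = 1" "a \<le> 1" "b \<le> 1"
  have "u * a \<le> u" "v * b \<le> v" using h by (auto simp: mult_left_le)
  then show ?thesis using h by linarith
qed

lemma box_props: "convex boxset" "closed boxset" "boxset \<noteq> {}"
proof -
  show "convex boxset" unfolding boxset_def convex_def
    by (auto simp: aux_cvx)
  have eq: "boxset = (\<Inter>i. {x. 0 \<le> x $ i} \<inter> {x. x $ i \<le> 1})" unfolding boxset_def by auto
  have "closed ({x::real^'n. 0 \<le> x $ i} \<inter> {x. x $ i \<le> 1})" for i
    by (intro closed_Int closed_halfspace_component_ge_cart closed_halfspace_component_le_cart)
  then show "closed boxset" unfolding eq by (intro closed_INT) blast
  show "boxset \<noteq> {}" using boxset_def by (rule_tac ex_in_conv[THEN iffD1]) (auto intro: exI[of _ 0])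
qed

lemma Y_props: "convex Yset" "closed Yset" "Yset \<noteq> {}"
proof -
  show "convex Yset" unfolding Yset_def convex_def by auto
  have "Yset = (\<Inter>i. {y. 0 \<le> fst y $ i})" unfolding Yset_def by auto
  moreover have "closed {y::(real^'m1)\<times>(real^'m2). 0 \<le> fst y $ i}" for i
  proof -
    have "{y::(real^'m1)\<times>(real^'m2). 0 \<le> fst y $ i} = {a. 0 \<le> a $ i} \<times> UNIV" by auto
    then show ?thesis by (simp add: closed_Times closed_halfspace_component_ge_cart[where i=i and a=0])
  qed
  ultimately show "closed Yset" by (metis closed_INT)
  show "Yset \<noteq> {}" unfolding Yset_def by (auto intro: exI[of _ 0])
qed

lemma lin_core:
  fixes A1 A2 A3 B1 B2 B3 B4 ee :: real
  assumes "(A1 + A2 - A3) / 2 + (B1 + B2 - B3 - B4) / 2 \<le> ee" "ee \<le> A1 / 8" "B4 \<le> A1 / 4"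
  shows "A1 / 4 + B1 / 2 \<le> A3 / 2 + B3 / 2 - (A2 / 2 + B2 / 2)"
  using assms by (simp add: field_simps)

lemma final_arith:
  fixes al be a1 a2 a3 b1 b2 b3 b4 e :: real
  assumes "al * ((a1 + a2 - a3 - 0) / 2) + be * ((b1 + b2 - b3 - b4) / 2) \<le> e"
    "e \<le> al / 8 * a1" "be * b4 \<le> al / 4 * a1"
  shows "al / 4 * a1 + be / 2 * b1 \<le> (al / 2 * a3 + be / 2 * b3) - (al / 2 * a2 + be / 2 * b2)"
proof -
  have e1: "al * ((a1 + a2 - a3 - 0) / 2) = (al * a1 + al * a2 - al * a3) / 2" by (simp add: algebra_simps)
  have e2: "be * ((b1 + b2 - b3 - b4) / 2) = (be * b1 + be * b2 - be * b3 - be * b4) / 2" by (simp add: algebra_simps)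
  have e3: "al / 8 * a1 = (al * a1) / 8" "al / 4 * a1 = (al * a1) / 4" "be / 2 * b1 = (be * b1) / 2"
    "al / 2 * a3 = (al * a3) / 2" "be / 2 * b3 = (be * b3) / 2" "al / 2 * a2 = (al * a2) / 2" "be / 2 * b2 = (be * b2) / 2"
    by simp_all
  show ?thesis using assms unfolding e1 e2 e3 by (rule lin_core)
qed

theorem mainTheorem1:
  fixes Q :: "real^'n^'n" and c :: "real^'n"
    and A :: "real^'n^'m1" and b :: "real^'m1"
    and B :: "real^'n^'m2" and d :: "real^'m2"
    and \<rho> \<tau>1 \<tau>2 :: real
    and x :: "nat \<Rightarrow> real^'n" and y :: "nat \<Rightarrow> (real^'m1) \<times> (real^'m2)"
    and xs :: "real^'n" and ys :: "(real^'m1) \<times> (real^'m2)"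
  assumes Qsym: "transpose Q = Q"
    and rho: "\<rho> \<ge> 0"
    and tau: "\<tau>1 > 0" "\<tau>2 > 0"
    and x0: "x 0 \<in> boxset"
    and yk: "\<And>k. k \<ge> 1 \<Longrightarrow>
       y k = closest_point Yset (y (k - 1) + \<tau>2 *\<^sub>R (Kop A B (xbar x (k - 1)) + (b, d)))"
    and xk: "\<And>k. k \<ge> 1 \<Longrightarrow>
       x k = closest_point boxset (x (k - 1) - \<tau>1 *\<^sub>R gradx Q c A B \<rho> (x (k - 1)) (y k))"
    and conv: "\<And>k. k \<ge> 1 \<Longrightarrow> convex_on UNIV (\<lambda>u. Lhat Q c A b B d \<rho> u (y k))"
    and step1: "\<tau>1 * \<tau>2 * (onorm (Kop A B))\<^sup>2 \<le> 1 / 4"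
    and step2: "4 * \<tau>1 * (2 * (onorm (\<lambda>v. Q *v v) + \<rho>)) \<le> 1"
    and saddle: "saddle_point Q c A b B d \<rho> xs ys"
  defines "eps \<equiv> \<lambda>k. Lhat Q c A b B d \<rho> (x k) (y k)
             - (Lhat Q c A b B d \<rho> (x (k - 1)) (y k)
                + gradx Q c A B \<rho> (x (k - 1)) (y k) \<bullet> (x k - x (k - 1)))"
  shows
    "(\<forall>k\<ge>1.
        (1 / \<tau>2) *\<^sub>R (yaux A B \<tau>2 x y (k - 1) - yaux A B \<tau>2 x y k)
          \<in> subdiff (\<lambda>v. ereal (- Lhat Q c A b B d \<rho> (x k) v) + h2 v) (y k)
      \<and> (1 / \<tau>1) *\<^sub>R (x (k - 1) - x k)
          \<in> eps_subdiff (eps k) (\<lambda>u. ereal (Lhat Q c A b B d \<rho> u (y k)) + h1 u) (x k))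
   \<and> (\<forall>k\<ge>1.
        eps k \<le> 1 / (8 * \<tau>1) * (norm (x k - x (k - 1)))\<^sup>2
      \<and> 1 / \<tau>2 * (norm (yaux A B \<tau>2 x y k - y k))\<^sup>2 \<le> 1 / (4 * \<tau>1) * (norm (x k - x (k - 1)))\<^sup>2)
   \<and> (\<forall>N\<ge>1.
        1 / (4 * \<tau>1) * (\<Sum>k=1..N. (norm (x k - x (k - 1)))\<^sup>2)
        + 1 / (2 * \<tau>2) * (\<Sum>k=1..N. (norm (y k - yaux A B \<tau>2 x y (k - 1)))\<^sup>2)
        \<le> 1 / (2 * \<tau>1) * (norm (xs - x 0))\<^sup>2 + 1 / (2 * \<tau>2) * (norm (ys - y 0))\<^sup>2)"
proof -
  let ?L = "Lhat Q c A b B d \<rho>"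
  let ?G = "gradx Q c A B \<rho>"
  let ?K = "Kop A B"
  let ?ya = "yaux A B \<tau>2 x y"
  define q where "q h = h \<bullet> (Q *v h) - \<rho> * (h \<bullet> h)" for h
  note bp = box_props
  note Yp = Y_props
  have xin: "x k \<in> boxset" for k
  proof (cases "k = 0")
    case True then show ?thesis using x0 by simp
  next
    case False then show ?thesis using xk[of k] closest_point_in_set[OF bp(2,3)] by simp
  qed
  have yin: "y k \<in> Yset" if "k \<ge> 1" for k
    using yk[OF that] closest_point_in_set[OF Yp(2,3)] by simp
  have projx: "(x (k - 1) - \<tau>1 *\<^sub>R ?G (x (k - 1)) (y k) - x k) \<bullet> (z - x k) \<le> 0"
    if "k \<ge> 1" "z \<in> boxset" for k z
    using closest_point_dot[OF bp(1,2) that(2), of "x (k - 1) - \<tau>1 *\<^sub>R ?G (x (k - 1)) (y k)"] xk[OF that(1)]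
    by simp
  have projy: "(y (k - 1) + \<tau>2 *\<^sub>R (?K (xbar x (k - 1)) + (b, d)) - y k) \<bullet> (v - y k) \<le> 0"
    if "k \<ge> 1" "v \<in> Yset" for k v
    using closest_point_dot[OF Yp(1,2) that(2), of "y (k - 1) + \<tau>2 *\<^sub>R (?K (xbar x (k - 1)) + (b, d))"] yk[OF that(1)]
    by simp
  have yaux_k: "?ya k = y k + \<tau>2 *\<^sub>R ?K (x k - x (k - 1))" if "k \<ge> 1" for k
  proof -
    have "xbar x k - x k = x k - x (k - 1)" using that
      by (simp add: xbar_def scaleR_2 algebra_simps)
    then show ?thesis using that by (simp add: yaux_def)
  qed
  have eps_q: "eps k = q (x k - x (k - 1))" for k
    using Lhat_expand[OF Qsym, of c A b B d \<rho> "x (k - 1)" "x k - x (k - 1)" "y k"]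
    by (simp add: eps_def q_def)
  have qnn: "0 \<le> q h" if "k \<ge> 1" for k :: nat and h
    using convex_q[OF Qsym, of c A b B d \<rho> "y k" h] conv[OF that] by (simp add: q_def)
  have Xk: "?L (x k) (y k) + ((1 / \<tau>1) *\<^sub>R (x (k - 1) - x k)) \<bullet> (z - x k) - eps k \<le> ?L z (y k)"
    if "k \<ge> 1" "z \<in> boxset" for k z
  proof -
    let ?g = "?G (x (k - 1)) (y k)"
    have e1: "?L z (y k) = ?L (x (k - 1)) (y k) + ?g \<bullet> (z - x (k - 1)) + q (z - x (k - 1))"
      using Lhat_expand[OF Qsym, of c A b B d \<rho> "x (k - 1)" "z - x (k - 1)" "y k"]
      by (simp add: q_def)
    have e2: "eps k = ?L (x k) (y k) - ?L (x (k - 1)) (y k) - ?g \<bullet> (x k - x (k - 1))"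
      by (simp add: eps_def)
    have p: "(x (k - 1) - x k) \<bullet> (z - x k) - \<tau>1 * (?g \<bullet> (z - x k)) \<le> 0"
      using projx[OF that] by (simp add: inner_diff_left)
    have p2: "(1 / \<tau>1) * ((x (k - 1) - x k) \<bullet> (z - x k)) \<le> ?g \<bullet> (z - x k)"
      using p tau(1) by (simp add: field_simps)
    have e3: "?g \<bullet> (z - x (k - 1)) = ?g \<bullet> (z - x k) + ?g \<bullet> (x k - x (k - 1))"
      by (simp add: inner_diff_right)
    show ?thesis using e1 e2 e3 p2 qnn[OF that(1), of "z - x (k - 1)"] by simp
  qed
  have Yk: "- ?L (x k) (y k) + ((1 / \<tau>2) *\<^sub>R (?ya (k - 1) - ?ya k)) \<bullet> (v - y k) \<le> - ?L (x k) v"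
    if "k \<ge> 1" "v \<in> Yset" for k v
  proof -
    let ?w = "y (k - 1) + \<tau>2 *\<^sub>R (?K (xbar x (k - 1)) + (b, d))"
    have key: "?ya (k - 1) - ?ya k + \<tau>2 *\<^sub>R (?K (x k) + (b, d)) = ?w - y k"
    proof (cases "k = 1")
      case True
      then show ?thesis using yaux_k[of 1]
        by (simp add: yaux_def xbar_def Kop_diff algebra_simps)
    next
      case False
      define j where "j = k - 2"
      have kj: "k = Suc (Suc j)" using False that by (simp add: j_def)
      have y1: "?ya (Suc j) = y (Suc j) + \<tau>2 *\<^sub>R ?K (x (Suc j) - x j)"
        using yaux_k[of "Suc j"] by simp
      have y2: "?ya (Suc (Suc j)) = y (Suc (Suc j)) + \<tau>2 *\<^sub>R ?K (x (Suc (Suc j)) - x (Suc j))"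
        using yaux_k[of "Suc (Suc j)"] by simp
      have xb: "xbar x (Suc j) = 2 *\<^sub>R x (Suc j) - x j" by (simp add: xbar_def)
      show ?thesis unfolding kj diff_Suc_1 y1 y2 xb Kop_diff Kop_scale Kop_add scaleR_2
        by (simp add: algebra_simps)
    qed
    have p: "(?w - y k) \<bullet> (v - y k) \<le> 0" using projy[OF that] by simp
    then have "(?ya (k - 1) - ?ya k) \<bullet> (v - y k) + \<tau>2 * ((?K (x k) + (b, d)) \<bullet> (v - y k)) \<le> 0"
      by (simp only: key[symmetric] inner_add_left inner_scaleR_left)
    then have "(1 / \<tau>2) * ((?ya (k - 1) - ?ya k) \<bullet> (v - y k)) + (?K (x k) + (b, d)) \<bullet> (v - y k) \<le> 0"
      using tau(2) by (simp add: field_simps)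
    moreover have "?L (x k) v - ?L (x k) (y k) = (v - y k) \<bullet> (?K (x k) + (b, d))"
      by (rule Lhat_ydiff)
    ultimately show ?thesis by (simp add: inner_commute)
  qed
  have Lbox: "\<And>u. u \<in> boxset \<Longrightarrow> h1 u = 0" and Lnbox: "\<And>u. u \<notin> boxset \<Longrightarrow> h1 u = \<infinity>"
    by (simp_all add: h1_def)
  have LY: "\<And>u. u \<in> Yset \<Longrightarrow> h2 u = 0" and LnY: "\<And>u. u \<notin> Yset \<Longrightarrow> h2 u = \<infinity>"
    by (simp_all add: h2_def)
  have y1: "y 1 \<in> Yset" using yin by simp
  have xsin: "xs \<in> boxset"
  proof (rule ccontr)
    assume "xs \<notin> boxset"
    then have "Phi Q c A b B d \<rho> xs ys = \<infinity>" by (simp add: Phi_def Lnbox)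
    moreover have "Phi Q c A b B d \<rho> xs ys \<le> Phi Q c A b B d \<rho> (x 0) ys"
      using saddle unfolding saddle_point_def by blast
    moreover have "Phi Q c A b B d \<rho> (x 0) ys \<noteq> \<infinity>"
      using x0 by (cases "ys \<in> Yset") (simp_all add: Phi_def Lbox LY LnY)
    ultimately show False by simp
  qed
  have ysin: "ys \<in> Yset"
  proof (rule ccontr)
    assume "ys \<notin> Yset"
    then have "Phi Q c A b B d \<rho> xs ys = -\<infinity>" by (simp add: Phi_def Lbox xsin LnY)
    moreover have "Phi Q c A b B d \<rho> xs (y 1) \<le> Phi Q c A b B d \<rho> xs ys"
      using saddle unfolding saddle_point_def by blast
    moreover have "Phi Q c A b B d \<rho> xs (y 1) \<noteq> -\<infinity>"
      using xsin y1 by (simp add: Phi_def Lbox LY)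
    ultimately show False by simp
  qed
  have S1: "?L xs v \<le> ?L xs ys" if "v \<in> Yset" for v
  proof -
    have "Phi Q c A b B d \<rho> xs v \<le> Phi Q c A b B d \<rho> xs ys"
      using saddle unfolding saddle_point_def by blast
    then show ?thesis using that xsin ysin by (simp add: Phi_def Lbox LY)
  qed
  have S2: "?L xs ys \<le> ?L u ys" if "u \<in> boxset" for u
  proof -
    have "Phi Q c A b B d \<rho> xs ys \<le> Phi Q c A b B d \<rho> u ys"
      using saddle unfolding saddle_point_def by blast
    then show ?thesis using that xsin ysin by (simp add: Phi_def Lbox LY)
  qed
  have partA: "\<forall>k\<ge>1.
        (1 / \<tau>2) *\<^sub>R (?ya (k - 1) - ?ya k)
          \<in> subdiff (\<lambda>v. ereal (- ?L (x k) v) + h2 v) (y k)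
      \<and> (1 / \<tau>1) *\<^sub>R (x (k - 1) - x k)
          \<in> eps_subdiff (eps k) (\<lambda>u. ereal (?L u (y k)) + h1 u) (x k)"
  proof (intro allI impI conjI)
    fix k :: nat assume k: "k \<ge> 1"
    show "(1 / \<tau>2) *\<^sub>R (?ya (k - 1) - ?ya k) \<in> subdiff (\<lambda>v. ereal (- ?L (x k) v) + h2 v) (y k)"
      unfolding subdiff_def
    proof (intro CollectI allI)
      fix v
      show "ereal (- ?L (x k) (y k)) + h2 (y k) + ereal (((1 / \<tau>2) *\<^sub>R (?ya (k - 1) - ?ya k)) \<bullet> (v - y k))
          \<le> ereal (- ?L (x k) v) + h2 v"
      proof (cases "v \<in> Yset")
        case True
        then show ?thesis using Yk[OF k True] yin[OF k] by (simp add: LY)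
      next
        case False
        then show ?thesis by (simp add: LnY)
      qed
    qed
    show "(1 / \<tau>1) *\<^sub>R (x (k - 1) - x k) \<in> eps_subdiff (eps k) (\<lambda>u. ereal (?L u (y k)) + h1 u) (x k)"
      unfolding eps_subdiff_def
    proof (intro CollectI allI)
      fix z
      show "ereal (?L (x k) (y k)) + h1 (x k) + ereal (((1 / \<tau>1) *\<^sub>R (x (k - 1) - x k)) \<bullet> (z - x k)) - ereal (eps k)
          \<le> ereal (?L z (y k)) + h1 z"
      proof (cases "z \<in> boxset")
        case True
        then show ?thesis using Xk[OF k True] xin[of k] by (simp add: Lbox)
      next
        case False
        then show ?thesis by (simp add: Lnbox)
      qed
    qed
  qed
  have Qn0: "(onorm (\<lambda>v. Q *v v) + \<rho>) * (8 * \<tau>1) \<le> 1"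
  proof -
    have "(onorm (\<lambda>v. Q *v v) + \<rho>) * (8 * \<tau>1) = 4 * \<tau>1 * (2 * (onorm (\<lambda>v. Q *v v) + \<rho>))"
      by (simp add: algebra_simps)
    also have "\<dots> \<le> 1" by (rule step2)
    finally show ?thesis .
  qed
  have Qn1: "onorm (\<lambda>v. Q *v v) + \<rho> \<le> 1 / (8 * \<tau>1)"
    using Qn0 tau(1) by (simp add: pos_le_divide_eq)
  have Qn: "onorm (\<lambda>v. Q *v v) \<le> 1 / (8 * \<tau>1)"
    using Qn1 rho by linarith
  have epsb: "eps k \<le> 1 / (8 * \<tau>1) * (norm (x k - x (k - 1)))\<^sup>2" for k
  proof -
    let ?h = "x k - x (k - 1)"
    have "?h \<bullet> (Q *v ?h) \<le> norm ?h * norm (Q *v ?h)" by (rule norm_cauchy_schwarz)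
    also have "\<dots> \<le> norm ?h * (onorm (\<lambda>v. Q *v v) * norm ?h)"
      using onorm[OF matrix_vector_mul_bounded_linear[of Q], of ?h] by (intro mult_left_mono) auto
    also have "\<dots> = onorm (\<lambda>v. Q *v v) * (norm ?h)\<^sup>2" by (simp add: power2_eq_square)
    also have "\<dots> \<le> 1 / (8 * \<tau>1) * (norm ?h)\<^sup>2" using Qn by (intro mult_right_mono) auto
    finally have "?h \<bullet> (Q *v ?h) \<le> 1 / (8 * \<tau>1) * (norm ?h)\<^sup>2" .
    moreover have "0 \<le> \<rho> * (?h \<bullet> ?h)" using rho by simp
    ultimately show ?thesis by (simp add: eps_q q_def)
  qed
  have Kb0: "(\<tau>2 * (onorm ?K)\<^sup>2) * (4 * \<tau>1) \<le> 1"
  proof -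
    have "(\<tau>2 * (onorm ?K)\<^sup>2) * (4 * \<tau>1) = 4 * (\<tau>1 * \<tau>2 * (onorm ?K)\<^sup>2)"
      by (simp add: algebra_simps)
    also have "\<dots> \<le> 4 * (1 / 4)" using step1 by (intro mult_left_mono) auto
    finally show ?thesis by simp
  qed
  have Kb: "\<tau>2 * (onorm ?K)\<^sup>2 \<le> 1 / (4 * \<tau>1)"
    using Kb0 tau(1) by (simp add: pos_le_divide_eq)
  have yb: "1 / \<tau>2 * (norm (?ya k - y k))\<^sup>2 \<le> 1 / (4 * \<tau>1) * (norm (x k - x (k - 1)))\<^sup>2"
    if "k \<ge> 1" for k
  proof -
    let ?h = "x k - x (k - 1)"
    have "?ya k - y k = \<tau>2 *\<^sub>R ?K ?h" using yaux_k[OF that] by simp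
    then have "1 / \<tau>2 * (norm (?ya k - y k))\<^sup>2 = \<tau>2 * (norm (?K ?h))\<^sup>2"
      using tau(2) by (simp add: power2_eq_square)
    also have "\<dots> \<le> \<tau>2 * (onorm ?K * norm ?h)\<^sup>2"
      using onorm[OF Kop_bl, of A B ?h] tau(2) by (intro mult_left_mono power_mono) auto
    also have "\<dots> = (\<tau>2 * (onorm ?K)\<^sup>2) * (norm ?h)\<^sup>2" by (simp add: power_mult_distrib)
    also have "\<dots> \<le> 1 / (4 * \<tau>1) * (norm ?h)\<^sup>2" using Kb by (intro mult_right_mono) auto
    finally show ?thesis .
  qed
  define D where "D k = 1 / (2 * \<tau>1) * (norm (x k - xs))\<^sup>2 + 1 / (2 * \<tau>2) * (norm (?ya k - ys))\<^sup>2" for k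
  define f where "f k = 1 / (4 * \<tau>1) * (norm (x k - x (k - 1)))\<^sup>2 + 1 / (2 * \<tau>2) * (norm (y k - ?ya (k - 1)))\<^sup>2" for k
  have stepk: "f k \<le> D (k - 1) - D k" if k: "k \<ge> 1" for k
  proof -
    have I1: "?L (x k) (y k) + ((1 / \<tau>1) *\<^sub>R (x (k - 1) - x k)) \<bullet> (xs - x k) - eps k \<le> ?L xs (y k)"
      by (rule Xk[OF k xsin])
    have I2: "- ?L (x k) (y k) + ((1 / \<tau>2) *\<^sub>R (?ya (k - 1) - ?ya k)) \<bullet> (ys - y k) \<le> - ?L (x k) ys"
      by (rule Yk[OF k ysin])
    have I3: "?L xs (y k) \<le> ?L (x k) ys" using S1[OF yin[OF k]] S2[OF xin[of k]] by linarith
    have I: "(1 / \<tau>1) * ((x (k - 1) - x k) \<bullet> (xs - x k)) + (1 / \<tau>2) * ((?ya (k - 1) - ?ya k) \<bullet> (ys - y k)) \<le> eps k"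
      using I1 I2 I3 unfolding inner_scaleR_left by linarith
    have P1: "(x (k - 1) - x k) \<bullet> (xs - x k) = ((norm (x k - x (k - 1)))\<^sup>2 + (norm (x k - xs))\<^sup>2 - (norm (x (k - 1) - xs))\<^sup>2 - 0) / 2"
      using polar[of "x (k - 1)" "x k" xs "x k"] by simp
    have P2: "(?ya (k - 1) - ?ya k) \<bullet> (ys - y k) = ((norm (y k - ?ya (k - 1)))\<^sup>2 + (norm (?ya k - ys))\<^sup>2 - (norm (?ya (k - 1) - ys))\<^sup>2 - (norm (?ya k - y k))\<^sup>2) / 2"
      by (rule polar)
    have F: "(1/\<tau>1) / 4 * (norm (x k - x (k - 1)))\<^sup>2 + (1/\<tau>2) / 2 * (norm (y k - ?ya (k - 1)))\<^sup>2
      \<le> ((1/\<tau>1) / 2 * (norm (x (k - 1) - xs))\<^sup>2 + (1/\<tau>2) / 2 * (norm (?ya (k - 1) - ys))\<^sup>2)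
       - ((1/\<tau>1) / 2 * (norm (x k - xs))\<^sup>2 + (1/\<tau>2) / 2 * (norm (?ya k - ys))\<^sup>2)"
    proof (rule final_arith)
      show "1 / \<tau>1 * (((norm (x k - x (k - 1)))\<^sup>2 + (norm (x k - xs))\<^sup>2 - (norm (x (k - 1) - xs))\<^sup>2 - 0) / 2) +
        1 / \<tau>2 * (((norm (y k - ?ya (k - 1)))\<^sup>2 + (norm (?ya k - ys))\<^sup>2 - (norm (?ya (k - 1) - ys))\<^sup>2 - (norm (?ya k - y k))\<^sup>2) / 2)
        \<le> eps k" using I unfolding P1 P2 .
      show "eps k \<le> 1 / \<tau>1 / 8 * (norm (x k - x (k - 1)))\<^sup>2" using epsb[of k] by simp
      show "1 / \<tau>2 * (norm (?ya k - y k))\<^sup>2 \<le> 1 / \<tau>1 / 4 * (norm (x k - x (k - 1)))\<^sup>2" using yb[OF k] by simp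
    qed
    then show ?thesis by (simp add: f_def D_def)
  qed
  have sumle: "(\<Sum>k=1..N. f k) \<le> D 0 - D N" for N
  proof (induction N)
    case 0 then show ?case by simp
  next
    case (Suc N)
    have "(\<Sum>k=1..Suc N. f k) = (\<Sum>k=1..N. f k) + f (Suc N)" by simp
    also have "\<dots> \<le> (D 0 - D N) + (D N - D (Suc N))" using Suc stepk[of "Suc N"] by simp
    finally show ?case by simp
  qed
  have Dnn: "0 \<le> D N" for N using tau by (simp add: D_def)
  have D0: "D 0 = 1 / (2 * \<tau>1) * (norm (xs - x 0))\<^sup>2 + 1 / (2 * \<tau>2) * (norm (ys - y 0))\<^sup>2"
    by (simp add: D_def yaux_def norm_minus_commute)
  have partC: "\<forall>N\<ge>1.
        1 / (4 * \<tau>1) * (\<Sum>k=1..N. (norm (x k - x (k - 1)))\<^sup>2)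
        + 1 / (2 * \<tau>2) * (\<Sum>k=1..N. (norm (y k - ?ya (k - 1)))\<^sup>2)
        \<le> 1 / (2 * \<tau>1) * (norm (xs - x 0))\<^sup>2 + 1 / (2 * \<tau>2) * (norm (ys - y 0))\<^sup>2"
  proof (intro allI impI)
    fix N :: nat
    have "1 / (4 * \<tau>1) * (\<Sum>k=1..N. (norm (x k - x (k - 1)))\<^sup>2)
        + 1 / (2 * \<tau>2) * (\<Sum>k=1..N. (norm (y k - ?ya (k - 1)))\<^sup>2) = (\<Sum>k=1..N. f k)"
      by (simp add: f_def sum.distrib sum_distrib_left)
    then show "1 / (4 * \<tau>1) * (\<Sum>k=1..N. (norm (x k - x (k - 1)))\<^sup>2)
        + 1 / (2 * \<tau>2) * (\<Sum>k=1..N. (norm (y k - ?ya (k - 1)))\<^sup>2)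
        \<le> 1 / (2 * \<tau>1) * (norm (xs - x 0))\<^sup>2 + 1 / (2 * \<tau>2) * (norm (ys - y 0))\<^sup>2"
      using sumle[of N] Dnn[of N] D0 by linarith
  qed
  show ?thesis using partA epsb yb partC by blast
qed

end
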